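(* Let $\{\mu_\theta\}_{\theta\in\Theta}$ be a family of Gibbs measures satisfying the uniform Gibbs property with constant $N$ and constants $\mathcal{P}_\theta$, for potentials $\phi_\theta$, and let $L$ satisfy the Loss Assumption. Then for every $\epsilon>0$ there exists $T>0$ such that for all $\theta,\theta'\in\Theta$, $y\in\mathcal{Y}$ and integers $t\ge1$, $$\frac{\int_{\mathcal{X}}\exp(-L^t_\theta(x,y))\,d\mu_\theta(x)}{\int_{\mathcal{X}}\exp(-L^t_{\theta'}(x',y))\,d\mu_{\theta'}(x')}\le N^2\exp\Big(t\big(\omega(d_\Theta(\theta,\theta'))+\epsilon\big)+(t+T)\big(|\mathcal{P}_\theta-\mathcal{P}_{\theta'}|+\|\phi_\theta-\phi_{\theta'}\|\big)\Big),$$ where $\|\cdot\|$ is the sup norm.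
   Context: Discrete time $\mathbb{T}=\mathbb{N}$. $\mathcal{S}$ is a finite alphabet, $\mathcal{X}=\mathcal{S}^{\mathbb{N}}$ with the product topology and metric $d_{\mathcal{X}}(x,x')=2^{-n(x,x')}$, $n(x,x')=\inf\{m:x_m\ne x'_m\}$; $(\Phi x)_s=x_{s+1}$; $\mathcal{F}_r=\sigma(x_0,\dots,x_r)$. $\mathcal{Y}$ is Polish with a measurable map $\Psi$ (iterates $\Psi^t$). $\Theta$ is a compact metric space with metric $d_\Theta$. $\phi^t=\sum_{s=0}^{t-1}\phi\circ\Phi^s$. Uniform Gibbs property: each $\mu_\theta$ is a $\Phi$-invariant Borel probability on $\mathcal{X}$, $\phi_\theta:\mathcal{X}\to\mathbb{R}$ is Hölder continuous, and there are $N>0$ and $\mathcal{P}_\theta\in\mathbb{R}$ with $N^{-1}\le\mu_\theta(\{\bar x:\bar x_i=x_i,0\le i\le t-1\})/\exp(-\mathcal{P}_\theta t+\phi_\theta^t(x))\le N$ for all $\theta$, $x$, $t\ge1$. Loss Assumption: $L:\Theta\times\mathcal{X}\times\mathcal{Y}\to\mathbb{R}$ with (1) for each $\theta$, $L_\theta$ is bounded continuous on $\mathcal{X}\times\mathcal{Y}$ and depends on $x$ only through $(x_0,\dots,x_r)$ for some $r$; (2) $|L_\theta(x,y)-L_{\theta'}(x',y)|\le\omega(d_\Theta(\theta,\theta'))+\omega(d_{\mathcal{X}}(x,x'))$ for some $\omega:[0,\infty)\to[0,\infty)$ with $\omega(0)=\lim_{r\to0^+}\omega(r)=0$. $L^t_\theta(x,y)=\sum_{s=0}^{t-1}L_\theta(\Phi^sx,\Psi^sy)$.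 *)

theory Defs
  imports "HOL-Probability.Probability"
begin

text \<open>Symbolic sequence space X = S^N, with S a finite alphabet (finite type 'a).\<close>

definition first_diff :: "(nat \<Rightarrow> 'a) \<Rightarrow> (nat \<Rightarrow> 'a) \<Rightarrow> nat" where
  "first_diff x x' = (LEAST m. x m \<noteq> x' m)"

text \<open>d_X(x,x') = 2^(-n(x,x')), with n = inf of an empty set = infinity when x = x'.\<close>
definition dX :: "(nat \<Rightarrow> 'a) \<Rightarrow> (nat \<Rightarrow> 'a) \<Rightarrow> real" where
  "dX x x' = (if x = x' then 0 else (1/2) ^ first_diff x x')"

definition shift :: "(nat \<Rightarrow> 'a) \<Rightarrow> (nat \<Rightarrow> 'a)" where
  "shift x = (\<lambda>s. x (Suc s))"

definition birk :: "((nat \<Rightarrow> 'a) \<Rightarrow> real) \<Rightarrow> nat \<Rightarrow> (nat \<Rightarrow> 'a) \<Rightarrow> real" where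
  "birk f t x = (\<Sum>s<t. f ((shift ^^ s) x))"

definition loss_sum ::
  "('c \<Rightarrow> (nat \<Rightarrow> 'a) \<Rightarrow> 'b \<Rightarrow> real) \<Rightarrow> ('b \<Rightarrow> 'b) \<Rightarrow> 'c \<Rightarrow> nat \<Rightarrow> (nat \<Rightarrow> 'a) \<Rightarrow> 'b \<Rightarrow> real" where
  "loss_sum L \<Psi> \<theta> t x y = (\<Sum>s<t. L \<theta> ((shift ^^ s) x) ((\<Psi> ^^ s) y))"

definition cyl :: "(nat \<Rightarrow> 'a) \<Rightarrow> nat \<Rightarrow> (nat \<Rightarrow> 'a) set" where
  "cyl x t = {x'. \<forall>i<t. x' i = x i}"

text \<open>Borel sigma-algebra of the product topology on S^N (S finite, discrete):
  the product sigma-algebra, generated by the cylinders.\<close>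
definition Xspace :: "(nat \<Rightarrow> 'a) measure" where
  "Xspace = Pi\<^sub>M UNIV (\<lambda>_. count_space UNIV)"

definition holder :: "((nat \<Rightarrow> 'a) \<Rightarrow> real) \<Rightarrow> bool" where
  "holder f \<longleftrightarrow> (\<exists>C \<alpha>. \<alpha> > 0 \<and> (\<forall>x x'. \<bar>f x - f x'\<bar> \<le> C * dX x x' powr \<alpha>))"

definition uniform_gibbs ::
  "'c set \<Rightarrow> ('c \<Rightarrow> (nat \<Rightarrow> 'a) measure) \<Rightarrow> ('c \<Rightarrow> (nat \<Rightarrow> 'a) \<Rightarrow> real) \<Rightarrow> real \<Rightarrow> ('c \<Rightarrow> real) \<Rightarrow> bool" where
  "uniform_gibbs \<Theta> \<mu> \<phi> N P \<longleftrightarrow> N > 0 \<and>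
     (\<forall>\<theta>\<in>\<Theta>. prob_space (\<mu> \<theta>) \<and> sets (\<mu> \<theta>) = sets Xspace
        \<and> shift \<in> measurable (\<mu> \<theta>) (\<mu> \<theta>) \<and> distr (\<mu> \<theta>) (\<mu> \<theta>) shift = \<mu> \<theta>
        \<and> holder (\<phi> \<theta>)
        \<and> (\<forall>x. \<forall>t\<ge>1.
             1 / N \<le> measure (\<mu> \<theta>) (cyl x t) / exp (- P \<theta> * real t + birk (\<phi> \<theta>) t x)
           \<and> measure (\<mu> \<theta>) (cyl x t) / exp (- P \<theta> * real t + birk (\<phi> \<theta>) t x) \<le> N))"

definition loss_assumption ::
  "('c::metric_space) set \<Rightarrow> ('c \<Rightarrow> (nat \<Rightarrow> 'a) \<Rightarrow> ('b::metric_space) \<Rightarrow> real) \<Rightarrow> (real \<Rightarrow> real) \<Rightarrow> bool" where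
  "loss_assumption \<Theta> L \<omega> \<longleftrightarrow>
     (\<forall>\<theta>\<in>\<Theta>.
        (\<exists>B. \<forall>x y. \<bar>L \<theta> x y\<bar> \<le> B)
      \<and> (\<forall>x y. \<forall>\<epsilon>>0. \<exists>\<delta>>0. \<forall>x' y'. dX x x' < \<delta> \<and> dist y y' < \<delta> \<longrightarrow>
             \<bar>L \<theta> x' y' - L \<theta> x y\<bar> < \<epsilon>)
      \<and> (\<exists>r. \<forall>x x' y. (\<forall>i\<le>r. x i = x' i) \<longrightarrow> L \<theta> x y = L \<theta> x' y))
   \<and> (\<forall>r\<ge>0. \<omega> r \<ge> 0) \<and> \<omega> 0 = 0 \<and> (\<omega> \<longlongrightarrow> 0) (at_right 0)
   \<and> (\<forall>\<theta>\<in>\<Theta>. \<forall>\<theta>'\<in>\<Theta>. \<forall>x x' y.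
        \<bar>L \<theta> x y - L \<theta>' x' y\<bar> \<le> \<omega> (dist \<theta> \<theta>') + \<omega> (dX x x'))"

end

theory Submission
  imports Defs
begin

lemma dX_bounds: "0 \<le> dX x x'" "dX x x' \<le> 1"
  by (auto simp: dX_def power_le_one)

lemma holder_bounded:
  assumes "holder f" shows "\<exists>B. \<forall>x. \<bar>f x\<bar> \<le> B"
proof -
  obtain C \<alpha> where a: "\<alpha> > 0" "\<And>x x'. \<bar>f x - f x'\<bar> \<le> C * dX x x' powr \<alpha>"
    using assms unfolding holder_def by blast
  fix x0
  have "\<bar>f x\<bar> \<le> \<bar>f x0\<bar> + \<bar>C\<bar>" for x
  proof -
    have p: "dX x x0 powr \<alpha> \<le> 1" "0 \<le> dX x x0 powr \<alpha>"
      using dX_bounds[of x x0] a(1) by (auto intro: powr_le1)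
    have "C * dX x x0 powr \<alpha> \<le> \<bar>C\<bar>"
    proof -
      have "C * dX x x0 powr \<alpha> \<le> \<bar>C\<bar> * dX x x0 powr \<alpha>"
        using p(2) by (intro mult_right_mono) auto
      also have "\<dots> \<le> \<bar>C\<bar>" using p by (intro mult_left_le) auto
      finally show ?thesis .
    qed
    then show ?thesis using a(2)[of x x0] by linarith
  qed
  then show ?thesis by blast
qed

lemma shift_pow: "(shift ^^ s) x i = x (s + i)"
  by (induction s arbitrary: x i) (auto simp: shift_def funpow_Suc_right)

lemma cyl_sets: "cyl w n \<in> sets Xspace"
proof -
  have "cyl w n = {x\<in>space Xspace. \<forall>i<n. x i = w i}"
    by (auto simp: cyl_def Xspace_def space_PiM)
  also have "\<dots> \<in> sets Xspace" unfolding Xspace_def by measurable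
  finally show ?thesis .
qed

lemma integral_cyl:
  fixes f :: "(nat \<Rightarrow> 'a::finite) \<Rightarrow> real"
  assumes "finite_measure M" "sets M = sets Xspace"
    and dep: "\<And>x x'. (\<forall>i<n. x i = x' i) \<Longrightarrow> f x = f x'"
  shows "integrable M f"
    "integral\<^sup>L M f = (\<Sum>w\<in>{..<n} \<rightarrow>\<^sub>E (UNIV::'a set). f w * measure M (cyl w n))"
proof -
  interpret finite_measure M by fact
  let ?W = "{..<n} \<rightarrow>\<^sub>E (UNIV::'a set)"
  have fin: "finite ?W" by (simp add: finite_PiE)
  have eq: "f x = (\<Sum>w\<in>?W. f w * indicator (cyl w n) x)" for x
  proof -
    let ?w0 = "restrict x {..<n}"
    have w0: "?w0 \<in> ?W" by auto
    have "(\<Sum>w\<in>?W. f w * indicator (cyl w n) x) = (\<Sum>w\<in>?W. if w = ?w0 then f ?w0 else 0)"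
    proof (rule sum.cong[OF refl])
      fix w assume w: "w \<in> ?W"
      have "x \<in> cyl w n \<longleftrightarrow> w = ?w0"
      proof
        assume "x \<in> cyl w n"
        then show "w = ?w0" using w by (auto simp: cyl_def fun_eq_iff PiE_def extensional_def)
      next
        assume "w = ?w0" then show "x \<in> cyl w n" by (auto simp: cyl_def)
      qed
      then show "f w * indicator (cyl w n) x = (if w = ?w0 then f ?w0 else 0)"
        by (auto simp: indicator_def)
    qed
    also have "\<dots> = f ?w0" using fin w0 by simp
    also have "\<dots> = f x" by (rule dep) auto
    finally show ?thesis by simp
  qed
  have cs: "cyl w n \<in> sets M" for w using cyl_sets assms(2) by simp
  have int: "integrable M (\<lambda>x. \<Sum>w\<in>?W. f w * indicator (cyl w n) x)"
  proof (rule Bochner_Integration.integrable_sum)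
    fix w
    have "integrable M (indicator (cyl w n) :: _ \<Rightarrow> real)"
      using cs[of w] by (intro integrable_real_indicator) (simp_all add: emeasure_finite less_top[symmetric])
    then show "integrable M (\<lambda>x. f w * indicator (cyl w n) x)" by (rule integrable_mult_right)
  qed
  have fe: "f = (\<lambda>x. \<Sum>w\<in>?W. f w * indicator (cyl w n) x)" using eq by (rule ext)
  show "integrable M f" by (subst fe) (fact int)
  have "integral\<^sup>L M f = integral\<^sup>L M (\<lambda>x. \<Sum>w\<in>?W. f w * indicator (cyl w n) x)"
    by (subst fe) (rule refl)
  also have "\<dots> = (\<Sum>w\<in>?W. f w * measure M (cyl w n))"
    proof (subst Bochner_Integration.integral_sum)
    fix w
    have "integrable M (indicator (cyl w n) :: _ \<Rightarrow> real)"
      using cs[of w] by (intro integrable_real_indicator) (simp_all add: emeasure_finite less_top[symmetric])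
    then show "integrable M (\<lambda>x. f w * indicator (cyl w n) x)" by (rule integrable_mult_right)
  next
    show "(\<Sum>w\<in>?W. integral\<^sup>L M (\<lambda>x. f w * indicator (cyl w n) x)) = (\<Sum>w\<in>?W. f w * measure M (cyl w n))"
      using cs by simp
  qed
  finally show "integral\<^sup>L M f = (\<Sum>w\<in>?W. f w * measure M (cyl w n))" .
qed


theorem lemma6p2:
  fixes \<Theta> :: "('c::metric_space) set"
    and \<mu> :: "'c \<Rightarrow> (nat \<Rightarrow> 'a::finite) measure"
    and \<phi> :: "'c \<Rightarrow> (nat \<Rightarrow> 'a) \<Rightarrow> real"
    and N :: real and P :: "'c \<Rightarrow> real"
    and L :: "'c \<Rightarrow> (nat \<Rightarrow> 'a) \<Rightarrow> 'b::polish_space \<Rightarrow> real"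
    and \<Psi> :: "'b \<Rightarrow> 'b" and \<omega> :: "real \<Rightarrow> real"
  assumes "compact \<Theta>"
    and "\<Psi> \<in> borel_measurable borel"
    and "uniform_gibbs \<Theta> \<mu> \<phi> N P"
    and "loss_assumption \<Theta> L \<omega>"
  shows "\<forall>\<epsilon>>0. \<exists>T>0. \<forall>\<theta>\<in>\<Theta>. \<forall>\<theta>'\<in>\<Theta>. \<forall>y. \<forall>t\<ge>1.
     (\<integral>x. exp (- loss_sum L \<Psi> \<theta> t x y) \<partial>\<mu> \<theta>) / (\<integral>x'. exp (- loss_sum L \<Psi> \<theta>' t x' y) \<partial>\<mu> \<theta>')
       \<le> N\<^sup>2 * exp (real t * (\<omega> (dist \<theta> \<theta>') + \<epsilon>)
              + (real t + T) * (\<bar>P \<theta> - P \<theta>'\<bar> + (SUP x. \<bar>\<phi> \<theta> x - \<phi> \<theta>' x\<bar>)))"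
proof (intro allI impI)
  fix \<epsilon> :: real assume \<epsilon>: "\<epsilon> > 0"
  have N: "N > 0" and G: "\<And>\<theta>. \<theta>\<in>\<Theta> \<Longrightarrow> prob_space (\<mu> \<theta>) \<and> sets (\<mu> \<theta>) = sets Xspace
        \<and> holder (\<phi> \<theta>)
        \<and> (\<forall>x. \<forall>t\<ge>1.
             1 / N \<le> measure (\<mu> \<theta>) (cyl x t) / exp (- P \<theta> * real t + birk (\<phi> \<theta>) t x)
           \<and> measure (\<mu> \<theta>) (cyl x t) / exp (- P \<theta> * real t + birk (\<phi> \<theta>) t x) \<le> N)"
    using assms(3) unfolding uniform_gibbs_def by auto
  have om0: "\<omega> 0 = 0" and omlim: "(\<omega> \<longlongrightarrow> 0) (at_right 0)"
    and Lbd: "\<And>\<theta> \<theta>' x x' y. \<theta>\<in>\<Theta> \<Longrightarrow> \<theta>'\<in>\<Theta> \<Longrightarrow>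
        \<bar>L \<theta> x y - L \<theta>' x' y\<bar> \<le> \<omega> (dist \<theta> \<theta>') + \<omega> (dX x x')"
    using assms(4) unfolding loss_assumption_def by auto
  have "eventually (\<lambda>r. \<omega> r < \<epsilon>/2) (at_right 0)"
    using omlim \<epsilon> by (intro order_tendstoD(2)) auto
  then obtain \<delta> where \<delta>: "\<delta> > 0" "\<And>r. r > 0 \<Longrightarrow> r < \<delta> \<Longrightarrow> \<omega> r < \<epsilon>/2"
    by (auto simp: eventually_at_right_field)
  obtain m0 :: nat where m0: "(1/2::real)^m0 < \<delta>" using real_arch_pow_inv[OF \<delta>(1), of "1/2"] by auto
  define m where "m = Suc m0"
  have m1: "m \<ge> 1" by (simp add: m_def)
  have mdelta: "(1/2::real)^m < \<delta>"
  proof -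
    have "(1/2::real)^(Suc m0) \<le> (1/2)^m0" by (rule power_decreasing) auto
    then show ?thesis using m0 unfolding m_def by linarith
  qed
  define tr where "tr = (\<lambda>(x::nat\<Rightarrow>'a) i. if i < m then x i else undefined)"
  have trL: "\<bar>L \<theta> x y - L \<theta> (tr x) y\<bar> \<le> \<epsilon>/2" if th: "\<theta>\<in>\<Theta>" for \<theta> x y
  proof -
    have "\<omega> (dX x (tr x)) \<le> \<epsilon>/2"
    proof (cases "x = tr x")
      case True then show ?thesis using om0 \<epsilon> by (simp add: dX_def)
    next
      case False
      then have ex: "\<exists>k. x k \<noteq> tr x k" by (auto simp: fun_eq_iff)
      have "x (first_diff x (tr x)) \<noteq> tr x (first_diff x (tr x))"
        unfolding first_diff_def using LeastI_ex[OF ex] .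
      then have fd: "first_diff x (tr x) \<ge> m" by (auto simp: tr_def split: if_splits)
      have "dX x (tr x) = (1/2)^first_diff x (tr x)" using False by (simp add: dX_def)
      also have "\<dots> \<le> (1/2)^m" using fd by (intro power_decreasing) auto
      finally have "dX x (tr x) < \<delta>" using mdelta by linarith
      moreover have "dX x (tr x) > 0" using False by (simp add: dX_def)
      ultimately show ?thesis using \<delta>(2) by fastforce
    qed
    then show ?thesis using Lbd[OF th th, of x y "tr x"] om0 by simp
  qed
  define Lt where "Lt = (\<lambda>\<theta> t x y. (\<Sum>s<t. L \<theta> (tr ((shift^^s) x)) ((\<Psi>^^s) y)))"
  have Ltapprox: "\<bar>loss_sum L \<Psi> \<theta> t x y - Lt \<theta> t x y\<bar> \<le> real t * (\<epsilon>/2)"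
    if th: "\<theta>\<in>\<Theta>" for \<theta> t x y
  proof -
    have "\<bar>loss_sum L \<Psi> \<theta> t x y - Lt \<theta> t x y\<bar>
       = \<bar>\<Sum>s<t. L \<theta> ((shift^^s) x) ((\<Psi>^^s) y) - L \<theta> (tr ((shift^^s) x)) ((\<Psi>^^s) y)\<bar>"
      unfolding loss_sum_def Lt_def by (simp add: sum_subtractf)
    also have "\<dots> \<le> (\<Sum>s<t. \<bar>L \<theta> ((shift^^s) x) ((\<Psi>^^s) y) - L \<theta> (tr ((shift^^s) x)) ((\<Psi>^^s) y)\<bar>)"
      by (rule sum_abs)
    also have "\<dots> \<le> (\<Sum>s<t. \<epsilon>/2)" by (intro sum_mono trL th)
    finally show ?thesis by simp
  qed
  have Ltdep: "Lt \<theta> t x y = Lt \<theta> t x' y" if "\<forall>i<t+m. x i = x' i" for \<theta> t x x' y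
  proof -
    have "tr ((shift^^s) x) = tr ((shift^^s) x')" if "s < t" for s
      using that \<open>\<forall>i<t+m. x i = x' i\<close> by (auto simp: fun_eq_iff tr_def shift_pow)
    then show ?thesis unfolding Lt_def by (intro sum.cong) auto
  qed
  have Ltcomp: "Lt \<theta>' t x y - real t * \<omega> (dist \<theta> \<theta>') \<le> Lt \<theta> t x y"
    if th: "\<theta>\<in>\<Theta>" "\<theta>'\<in>\<Theta>" for \<theta> \<theta>' t x y
  proof -
    have "L \<theta>' z w - \<omega> (dist \<theta> \<theta>') \<le> L \<theta> z w" for z w
      using Lbd[OF th, of z w z] om0 by (simp add: dX_def)
    then have "(\<Sum>s<t. L \<theta>' (tr ((shift^^s) x)) ((\<Psi>^^s) y) - \<omega> (dist \<theta> \<theta>'))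
        \<le> (\<Sum>s<t. L \<theta> (tr ((shift^^s) x)) ((\<Psi>^^s) y))" by (intro sum_mono)
    then show ?thesis unfolding Lt_def by (simp add: sum_subtractf)
  qed
  show "\<exists>T>0. \<forall>\<theta>\<in>\<Theta>. \<forall>\<theta>'\<in>\<Theta>. \<forall>y. \<forall>t\<ge>1.
     (\<integral>x. exp (- loss_sum L \<Psi> \<theta> t x y) \<partial>\<mu> \<theta>) / (\<integral>x'. exp (- loss_sum L \<Psi> \<theta>' t x' y) \<partial>\<mu> \<theta>')
       \<le> N\<^sup>2 * exp (real t * (\<omega> (dist \<theta> \<theta>') + \<epsilon>)
              + (real t + T) * (\<bar>P \<theta> - P \<theta>'\<bar> + (SUP x. \<bar>\<phi> \<theta> x - \<phi> \<theta>' x\<bar>)))"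
  proof (intro exI[of _ "real m"] conjI ballI allI impI)
    show "real m > 0" using m1 by simp
    fix \<theta> \<theta>' y and t :: nat
    assume th: "\<theta>\<in>\<Theta>" "\<theta>'\<in>\<Theta>" and t1: "t \<ge> 1"
    define n where "n = t + m"
    have n1: "n \<ge> 1" using t1 by (simp add: n_def)
    define S where "S = (SUP x. \<bar>\<phi> \<theta> x - \<phi> \<theta>' x\<bar>)"
    define K where "K = \<bar>P \<theta> - P \<theta>'\<bar> + S"
    note G1 = G[OF th(1)] and G2 = G[OF th(2)]
    obtain B1 where B1: "\<And>x. \<bar>\<phi> \<theta> x\<bar> \<le> B1" using holder_bounded G1 by blast
    obtain B2 where B2: "\<And>x. \<bar>\<phi> \<theta>' x\<bar> \<le> B2" using holder_bounded G2 by blast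
    have bdd: "bdd_above (range (\<lambda>x. \<bar>\<phi> \<theta> x - \<phi> \<theta>' x\<bar>))"
    proof (rule bdd_aboveI2)
      fix x show "\<bar>\<phi> \<theta> x - \<phi> \<theta>' x\<bar> \<le> B1 + B2" using B1[of x] B2[of x] by linarith
    qed
    have Sx: "\<bar>\<phi> \<theta> x - \<phi> \<theta>' x\<bar> \<le> S" for x
      unfolding S_def by (rule cSUP_upper[OF UNIV_I bdd])
    have mcomp: "measure (\<mu> \<theta>) (cyl w n) \<le> N\<^sup>2 * exp (real n * K) * measure (\<mu> \<theta>') (cyl w n)" for w
    proof -
      define E1 where "E1 = exp (- P \<theta> * real n + birk (\<phi> \<theta>) n w)"
      define E2 where "E2 = exp (- P \<theta>' * real n + birk (\<phi> \<theta>') n w)"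
      have E1p: "E1 > 0" and E2p: "E2 > 0" by (simp_all add: E1_def E2_def)
      have "measure (\<mu> \<theta>) (cyl w n) / E1 \<le> N" using G1 n1 unfolding E1_def by blast
      then have m1: "measure (\<mu> \<theta>) (cyl w n) \<le> N * E1" using E1p by (simp add: divide_le_eq)
      have "1 / N \<le> measure (\<mu> \<theta>') (cyl w n) / E2" using G2 n1 unfolding E2_def by blast
      then have m2: "E2 \<le> N * measure (\<mu> \<theta>') (cyl w n)" using E2p N
        by (simp add: divide_le_eq le_divide_eq mult.commute)
      have "birk (\<phi> \<theta>) n w - birk (\<phi> \<theta>') n w = (\<Sum>s<n. \<phi> \<theta> ((shift^^s) w) - \<phi> \<theta>' ((shift^^s) w))"
        unfolding birk_def by (simp add: sum_subtractf)
      also have "\<dots> \<le> (\<Sum>s<n. S)" by (intro sum_mono) (use Sx in \<open>auto simp: abs_le_iff\<close>)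
      finally have bk: "birk (\<phi> \<theta>) n w - birk (\<phi> \<theta>') n w \<le> real n * S" by simp
      have "(P \<theta>' - P \<theta>) * real n \<le> \<bar>P \<theta> - P \<theta>'\<bar> * real n"
        by (intro mult_right_mono) auto
      with bk have "- P \<theta> * real n + birk (\<phi> \<theta>) n w \<le> (- P \<theta>' * real n + birk (\<phi> \<theta>') n w) + real n * K"
        unfolding K_def by (simp add: algebra_simps)
      then have "E1 \<le> E2 * exp (real n * K)" unfolding E1_def E2_def by (simp add: exp_add[symmetric])
      then have "N * E1 \<le> N * (E2 * exp (real n * K))" using N by simp
      also have "\<dots> \<le> N * ((N * measure (\<mu> \<theta>') (cyl w n)) * exp (real n * K))"
        using m2 N by (intro mult_left_mono mult_right_mono) auto
      finally show ?thesis using m1 by (simp add: power2_eq_square algebra_simps)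
    qed
    define g1 where "g1 = (\<lambda>x. exp (- Lt \<theta> t x y))"
    define g2 where "g2 = (\<lambda>x. exp (- Lt \<theta>' t x y))"
    have dep1: "g1 x = g1 x'" if "\<forall>i<n. x i = x' i" for x x'
      unfolding g1_def using Ltdep[where \<theta>=\<theta> and t=t and x=x and x'=x' and y=y] that unfolding n_def by simp
    have dep2: "g2 x = g2 x'" if "\<forall>i<n. x i = x' i" for x x'
      unfolding g2_def using Ltdep[where \<theta>=\<theta>' and t=t and x=x and x'=x' and y=y] that unfolding n_def by simp
    have fm1: "finite_measure (\<mu> \<theta>)" using G1 prob_space.axioms(1) by blast
    have fm2: "finite_measure (\<mu> \<theta>')" using G2 prob_space.axioms(1) by blast
    note ic1 = integral_cyl[OF fm1 conjunct1[OF conjunct2[OF G1]] dep1]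
    note ic2 = integral_cyl[OF fm2 conjunct1[OF conjunct2[OF G2]] dep2]
    define f1 where "f1 = (\<lambda>x. exp (- loss_sum L \<Psi> \<theta> t x y))"
    define f2 where "f2 = (\<lambda>x. exp (- loss_sum L \<Psi> \<theta>' t x y))"
    define I1 where "I1 = integral\<^sup>L (\<mu> \<theta>) f1"
    define I2 where "I2 = integral\<^sup>L (\<mu> \<theta>') f2"
    define R where "R = N\<^sup>2 * exp (real t * (\<omega> (dist \<theta> \<theta>') + \<epsilon>) + (real t + real m) * K)"
    have R0: "R \<ge> 0" unfolding R_def by simp
    have I2nn: "I2 \<ge> 0" unfolding I2_def f2_def by (intro integral_nonneg_AE) auto
    have main: "I1 / I2 \<le> R"
    proof (cases "integrable (\<mu> \<theta>) f1 \<and> integrable (\<mu> \<theta>') f2")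
      case False
      then have "I1 = 0 \<or> I2 = 0" unfolding I1_def I2_def using not_integrable_integral_eq by blast
      then show ?thesis using R0 by auto
    next
      case True
      define W where "W = {..<n} \<rightarrow>\<^sub>E (UNIV::'a set)"
      have "I1 \<le> integral\<^sup>L (\<mu> \<theta>) (\<lambda>x. exp (real t * (\<epsilon>/2)) * g1 x)"
        unfolding I1_def
      proof (rule integral_mono)
        show "integrable (\<mu> \<theta>) f1" using True by blast
        show "integrable (\<mu> \<theta>) (\<lambda>x. exp (real t * (\<epsilon>/2)) * g1 x)" using ic1(1) by simp
        fix x
        have "- loss_sum L \<Psi> \<theta> t x y \<le> real t * (\<epsilon>/2) + - Lt \<theta> t x y"
          using Ltapprox[OF th(1), of t x y] by linarith
        then show "f1 x \<le> exp (real t * (\<epsilon>/2)) * g1 x"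
          unfolding f1_def g1_def by (simp add: exp_add[symmetric])
      qed
      also have "\<dots> = exp (real t * (\<epsilon>/2)) * (\<Sum>w\<in>W. g1 w * measure (\<mu> \<theta>) (cyl w n))"
        using ic1(2) unfolding W_def by simp
      also have "(\<Sum>w\<in>W. g1 w * measure (\<mu> \<theta>) (cyl w n))
          \<le> (\<Sum>w\<in>W. (exp (real t * \<omega> (dist \<theta> \<theta>')) * g2 w) * (N\<^sup>2 * exp (real n * K) * measure (\<mu> \<theta>') (cyl w n)))"
      proof (intro sum_mono mult_mono)
        fix w
        have "- Lt \<theta> t w y \<le> real t * \<omega> (dist \<theta> \<theta>') + - Lt \<theta>' t w y"
          using Ltcomp[OF th, of t w y] by linarith
        then show "g1 w \<le> exp (real t * \<omega> (dist \<theta> \<theta>')) * g2 w"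
          unfolding g1_def g2_def by (simp add: exp_add[symmetric])
        show "measure (\<mu> \<theta>) (cyl w n) \<le> N\<^sup>2 * exp (real n * K) * measure (\<mu> \<theta>') (cyl w n)"
          by (rule mcomp)
        show "0 \<le> exp (real t * \<omega> (dist \<theta> \<theta>')) * g2 w" unfolding g2_def by simp
        show "0 \<le> measure (\<mu> \<theta>) (cyl w n)" by simp
      qed
      also have "\<dots> = exp (real t * \<omega> (dist \<theta> \<theta>')) * N\<^sup>2 * exp (real n * K) * (\<Sum>w\<in>W. g2 w * measure (\<mu> \<theta>') (cyl w n))"
        by (simp add: sum_distrib_left algebra_simps)
      also have "(\<Sum>w\<in>W. g2 w * measure (\<mu> \<theta>') (cyl w n)) = integral\<^sup>L (\<mu> \<theta>') g2"
        using ic2(2) unfolding W_def by simp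
      also have "integral\<^sup>L (\<mu> \<theta>') g2 \<le> integral\<^sup>L (\<mu> \<theta>') (\<lambda>x. exp (real t * (\<epsilon>/2)) * f2 x)"
      proof (rule integral_mono)
        show "integrable (\<mu> \<theta>') g2" by (rule ic2(1))
        show "integrable (\<mu> \<theta>') (\<lambda>x. exp (real t * (\<epsilon>/2)) * f2 x)" using True by simp
        fix x
        have "- Lt \<theta>' t x y \<le> real t * (\<epsilon>/2) + - loss_sum L \<Psi> \<theta>' t x y"
          using Ltapprox[OF th(2), of t x y] by linarith
        then show "g2 x \<le> exp (real t * (\<epsilon>/2)) * f2 x"
          unfolding f2_def g2_def by (simp add: exp_add[symmetric])
      qed
      also have "integral\<^sup>L (\<mu> \<theta>') (\<lambda>x. exp (real t * (\<epsilon>/2)) * f2 x) = exp (real t * (\<epsilon>/2)) * I2"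
        unfolding I2_def by simp
      finally have "I1 \<le> exp (real t * (\<epsilon>/2)) * (exp (real t * \<omega> (dist \<theta> \<theta>')) * N\<^sup>2 * exp (real n * K) * (exp (real t * (\<epsilon>/2)) * I2))"
        by (simp add: mult_left_mono)
      also have "\<dots> = R * I2"
        unfolding R_def n_def by (simp add: exp_add[symmetric] algebra_simps)
      finally have le: "I1 \<le> R * I2" .
      show ?thesis
      proof (cases "I2 = 0")
        case True then show ?thesis using R0 by simp
      next
        case False
        then have "I2 > 0" using I2nn by simp
        then show ?thesis using le by (simp add: divide_le_eq)
      qed
    qed
    then show "(\<integral>x. exp (- loss_sum L \<Psi> \<theta> t x y) \<partial>\<mu> \<theta>) / (\<integral>x'. exp (- loss_sum L \<Psi> \<theta>' t x' y) \<partial>\<mu> \<theta>')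
       \<le> N\<^sup>2 * exp (real t * (\<omega> (dist \<theta> \<theta>') + \<epsilon>)
              + (real t + real m) * (\<bar>P \<theta> - P \<theta>'\<bar> + (SUP x. \<bar>\<phi> \<theta> x - \<phi> \<theta>' x\<bar>)))"
      unfolding I1_def I2_def f1_def f2_def R_def K_def S_def .
  qed
qed

end
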